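(* Let $G$ be a finite group and $H$ a subgroup such that $\mathcal{O}_G(H)$ is Boolean. If there are $K,L\in\mathcal{O}_G(H)$ with $K<L$ and $|L:K|=2$, then there is an atom $A$ of $\mathcal{O}_G(H)$ such that $L=K\vee A$ and $|G:A^{\complement}|=2$.
   Context: $\mathcal{O}_G(H)=\{K\mid H\le K\le G\}$ with $\vee$ the subgroup generated; Boolean means isomorphic to the lattice of subsets of a finite set. An atom is a minimal element of $\mathcal{O}_G(H)\setminus\{H\}$; $A^{\complement}$ is the lattice complement of $A$ (so $A\wedge A^{\complement}=H$, $A\vee A^{\complement}=G$). *)

theory Defs
  imports "HOL-Algebra.Algebra"
begin

definition overgroups :: "('a, 'b) monoid_scheme \<Rightarrow> 'a set \<Rightarrow> 'a set set" where
  "overgroups G H = {K. subgroup K G \<and> H \<subseteq> K}"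

definition sg_join :: "('a, 'b) monoid_scheme \<Rightarrow> 'a set \<Rightarrow> 'a set \<Rightarrow> 'a set" where
  "sg_join G K L = generate G (K \<union> L)"

text \<open>Boolean: order-isomorphic (hence lattice-isomorphic) to the subset lattice of a
  finite set; every finite set is in bijection with some {..<n}.\<close>
definition boolean_interval :: "('a, 'b) monoid_scheme \<Rightarrow> 'a set \<Rightarrow> bool" where
  "boolean_interval G H \<longleftrightarrow> (\<exists>(n::nat) f. bij_betw f (overgroups G H) (Pow {..<n}) \<and>
      (\<forall>K\<in>overgroups G H. \<forall>L\<in>overgroups G H. K \<subseteq> L \<longleftrightarrow> f K \<subseteq> f L))"

definition is_atom :: "('a, 'b) monoid_scheme \<Rightarrow> 'a set \<Rightarrow> 'a set \<Rightarrow> bool" where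
  "is_atom G H A \<longleftrightarrow> A \<in> overgroups G H \<and> A \<noteq> H \<and>
      (\<forall>K\<in>overgroups G H. K \<noteq> H \<and> K \<subseteq> A \<longrightarrow> K = A)"

definition is_complement :: "('a, 'b) monoid_scheme \<Rightarrow> 'a set \<Rightarrow> 'a set \<Rightarrow> 'a set \<Rightarrow> bool" where
  "is_complement G H A B \<longleftrightarrow> B \<in> overgroups G H \<and> A \<inter> B = H \<and> sg_join G A B = carrier G"

definition sg_index :: "('a, 'b) monoid_scheme \<Rightarrow> 'a set \<Rightarrow> 'a set \<Rightarrow> nat" where
  "sg_index G L K = card (rcosets\<^bsub>G\<lparr>carrier := L\<rparr>\<^esub> K)"

end

theory Submission
  imports Defs
begin


lemma nat2: assumes "(a::nat) * b = 2" shows "a = 1 \<or> b = 1"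
proof (rule ccontr)
  assume "\<not> ?thesis"
  moreover have "a \<noteq> 0" using assms by (cases "a = 0") simp_all
  moreover have "b \<noteq> 0" using assms by (cases "b = 0") simp_all
  ultimately have "a \<ge> 2" "b \<ge> 2" by auto
  hence "a * b \<ge> 2 * 2" using mult_le_mono by blast
  thus False using assms by simp
qed

lemma idx_card:
  assumes "group G" "finite (carrier G)" "subgroup K G" "subgroup L G" "K \<subseteq> L"
  shows "sg_index G L K * card K = card L"
proof -
  interpret group G by fact
  have "subgroup K (G\<lparr>carrier := L\<rparr>)" using subgroup_incl assms by blast
  moreover have "group (G\<lparr>carrier := L\<rparr>)" using assms(4) subgroup.subgroup_is_group assms(1) by blast
  ultimately show ?thesis unfolding sg_index_def
    using group.lagrange[of "G\<lparr>carrier := L\<rparr>" K] by (simp add: order_def)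
qed

lemma idx2_between:
  assumes "group G" "finite (carrier G)" "subgroup K G" "subgroup L G" "K \<subseteq> L"
    "sg_index G L K = 2" "subgroup M G" "K \<subseteq> M" "M \<subseteq> L"
  shows "M = K \<or> M = L"
proof -
  interpret group G by fact
  have fL: "finite L" using assms(2,4) subgroup.subset finite_subset by blast
  have fM: "finite M" using assms(2,7) subgroup.subset finite_subset by blast
  have a: "sg_index G L M * card M = card L" using idx_card assms by blast
  have b: "sg_index G M K * card K = card M" using idx_card assms by blast
  have c: "2 * card K = card L" using idx_card[OF assms(1-5)] assms(6) by simp
  have "finite K" using fM assms(8) finite_subset by blast
  moreover have "K \<noteq> {}" using subgroup.one_closed[OF assms(3)] by blast
  ultimately have pos: "card K > 0" by (simp add: card_gt_0_iff)
  have "sg_index G L M * sg_index G M K * card K = 2 * card K" using a b c by (simp add: mult.assoc)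
  hence "sg_index G L M * sg_index G M K = 2" using pos by simp
  hence "sg_index G L M = 1 \<or> sg_index G M K = 1"
    using nat2 by blast
  thus ?thesis
  proof
    assume "sg_index G L M = 1" hence "card M = card L" using a by simp
    thus ?thesis using card_subset_eq fL assms(9) by blast
  next
    assume "sg_index G M K = 1" hence "card K = card M" using b by simp
    thus ?thesis using card_subset_eq[OF fM assms(8)] by simp
  qed
qed

lemma idx2_mult:
  fixes G (structure)
  assumes "group G" "finite (carrier G)" "subgroup K G" "subgroup L G" "K \<subseteq> L"
    "sg_index G L K = 2" "y \<in> L - K" "z \<in> L - K"
  shows "y \<otimes>\<^bsub>G\<^esub> z \<in> K"
proof -
  interpret group G by fact
  have fL: "finite L" using assms(2,4) subgroup.subset finite_subset by blast
  have c: "2 * card K = card L" using idx_card[OF assms(1-5)] assms(6) by simp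
  have zc: "z \<in> carrier G" using assms(4,8) subgroup.subset by blast
  have iz1: "inv z \<in> L" using subgroup.m_inv_closed[OF assms(4)] assms(8) by blast
  have iz2: "inv z \<notin> K"
  proof
    assume "inv z \<in> K" hence "inv (inv z) \<in> K" using subgroup.m_inv_closed[OF assms(3)] by blast
    thus False using zc assms(8) by simp
  qed
  have iz: "inv z \<in> L - K" using iz1 iz2 by blast
  let ?f = "\<lambda>k. k \<otimes> inv z"
  have inj: "inj_on ?f K"
  proof (rule inj_onI)
    fix a b assume ab: "a \<in> K" "b \<in> K" "a \<otimes> inv z = b \<otimes> inv z"
    have "a \<in> carrier G" "b \<in> carrier G" using ab(1,2) subgroup.mem_carrier[OF assms(3)] by auto
    thus "a = b" using ab(3) zc by simp
  qed
  have sub: "?f ` K \<subseteq> L - K"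
  proof
    fix w assume "w \<in> ?f ` K"
    then obtain k where k: "k \<in> K" "w = k \<otimes> inv z" by blast
    have kc: "k \<in> carrier G" using k(1) subgroup.mem_carrier[OF assms(3)] by auto
    have "k \<in> L" using k assms(5) by blast
    hence "w \<in> L" using k(2) iz1 subgroup.m_closed[OF assms(4)] by blast
    moreover have "w \<notin> K"
    proof
      assume "w \<in> K"
      hence "inv k \<otimes> w \<in> K" using subgroup.m_closed[OF assms(3) subgroup.m_inv_closed[OF assms(3) k(1)]] by blast
      moreover have "inv k \<otimes> w = inv z" using k kc zc by (simp add: m_assoc[symmetric])
      ultimately show False using iz by simp
    qed
    ultimately show "w \<in> L - K" by blast
  qed
  have "card (?f ` K) = card (L - K)"
  proof -
    have "finite K" using fL assms(5) finite_subset by blast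
    have "card (L - K) = card L - card K" using card_Diff_subset[OF \<open>finite K\<close> assms(5)] .
    moreover have "card (?f ` K) = card K" by (rule card_image[OF inj])
    moreover have "card K = card L - card K" using c by linarith
    ultimately show ?thesis by argo
  qed
  hence eq: "?f ` K = L - K" using card_subset_eq[OF _ sub] fL by blast
  then obtain k where k: "k \<in> K" "y = k \<otimes> inv z" using assms(7) by blast
  have kc: "k \<in> carrier G" using k(1) subgroup.mem_carrier[OF assms(3)] by auto
  have "y \<otimes> z = k" using k kc zc by (simp add: m_assoc)
  thus ?thesis using k by simp
qed



definition cj :: "('a, 'b) monoid_scheme \<Rightarrow> 'a \<Rightarrow> 'a set \<Rightarrow> 'a set" where
  "cj G c S = (\<lambda>s. c \<otimes>\<^bsub>G\<^esub> s \<otimes>\<^bsub>G\<^esub> inv\<^bsub>G\<^esub> c) ` S"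

context group begin

lemma cancel1 [simp]: "c \<in> carrier G \<Longrightarrow> x \<in> carrier G \<Longrightarrow> inv c \<otimes> (c \<otimes> x) = x"
  by (simp add: m_assoc[symmetric])
lemma cancel2 [simp]: "c \<in> carrier G \<Longrightarrow> x \<in> carrier G \<Longrightarrow> c \<otimes> (inv c \<otimes> x) = x"
  by (simp add: m_assoc[symmetric])

lemma cj_subgroup:
  assumes c: "c \<in> carrier G" and S: "subgroup S G"
  shows "subgroup (cj G c S) G"
proof (rule subgroupI)
  have Sc: "S \<subseteq> carrier G" using subgroup.subset[OF S] .
  show "cj G c S \<subseteq> carrier G" using Sc c unfolding cj_def by auto
  show "cj G c S \<noteq> {}" using subgroup.one_closed[OF S] unfolding cj_def by auto
  fix a assume "a \<in> cj G c S"
  then obtain s where s: "s \<in> S" "a = c \<otimes> s \<otimes> inv c" unfolding cj_def by blast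
  have sc: "s \<in> carrier G" using s(1) Sc by auto
  have "inv a = c \<otimes> inv s \<otimes> inv c" using s sc c by (simp add: inv_mult_group m_assoc)
  moreover have "inv s \<in> S" using subgroup.m_inv_closed[OF S s(1)] .
  ultimately show "inv a \<in> cj G c S" unfolding cj_def by blast
next
  have Sc: "S \<subseteq> carrier G" using subgroup.subset[OF S] .
  fix a b assume "a \<in> cj G c S" "b \<in> cj G c S"
  then obtain s t where s: "s \<in> S" "a = c \<otimes> s \<otimes> inv c" and t: "t \<in> S" "b = c \<otimes> t \<otimes> inv c"
    unfolding cj_def by blast
  have sc: "s \<in> carrier G" "t \<in> carrier G" using s(1) t(1) Sc by auto
  have "a \<otimes> b = c \<otimes> (s \<otimes> t) \<otimes> inv c" using s t sc c by (simp add: m_assoc)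
  moreover have "s \<otimes> t \<in> S" using subgroup.m_closed[OF S s(1) t(1)] .
  ultimately show "a \<otimes> b \<in> cj G c S" unfolding cj_def by blast
qed

lemma cj_inv:
  assumes c: "c \<in> carrier G" and S: "S \<subseteq> carrier G"
  shows "cj G (inv c) (cj G c S) = S"
proof -
  have "\<And>s. s \<in> carrier G \<Longrightarrow> inv c \<otimes> (c \<otimes> s \<otimes> inv c) \<otimes> inv (inv c) = s"
    using c by (simp add: m_assoc)
  hence "cj G (inv c) (cj G c S) = (\<lambda>s. s) ` S" unfolding cj_def image_image
    using S by (intro image_cong) auto
  thus ?thesis by simp
qed

lemma cj_inv2:
  assumes c: "c \<in> carrier G" and S: "S \<subseteq> carrier G"
  shows "cj G c (cj G (inv c) S) = S"
  using cj_inv[of "inv c" S] assms by simp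

lemma cj_mono: "S \<subseteq> T \<Longrightarrow> cj G c S \<subseteq> cj G c T"
  unfolding cj_def by blast

lemma cj_carrier: assumes c: "c \<in> carrier G" shows "cj G c (carrier G) = carrier G"
proof
  show "cj G c (carrier G) \<subseteq> carrier G" using c unfolding cj_def by auto
  have "cj G (inv c) (carrier G) \<subseteq> carrier G" using c unfolding cj_def by auto
  hence "cj G c (cj G (inv c) (carrier G)) \<subseteq> cj G c (carrier G)" by (rule cj_mono)
  thus "carrier G \<subseteq> cj G c (carrier G)" using cj_inv2[OF c] by simp
qed

lemma cj_Int:
  assumes c: "c \<in> carrier G" and S: "S \<subseteq> carrier G" and T: "T \<subseteq> carrier G"
  shows "cj G c (S \<inter> T) = cj G c S \<inter> cj G c T"
proof -
  have "inj_on (\<lambda>s. c \<otimes> s \<otimes> inv c) (carrier G)"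
    using c by (intro inj_onI) (simp add: m_assoc)
  thus ?thesis unfolding cj_def using inj_on_image_Int S T by blast
qed

end


theorem lemma10p8:
  fixes G :: "('a, 'b) monoid_scheme" and H K L :: "'a set"
  assumes "group G" and "finite (carrier G)"
    and "subgroup H G"
    and "boolean_interval G H"
    and "K \<in> overgroups G H" and "L \<in> overgroups G H"
    and "K \<subset> L" and "sg_index G L K = 2"
  shows "\<exists>A B. is_atom G H A \<and> L = sg_join G K A \<and> is_complement G H A B
                \<and> sg_index G (carrier G) B = 2"
proof -
  obtain n :: nat and f :: "'a set \<Rightarrow> nat set" where bij: "bij_betw f (overgroups G H) (Pow {..<n})"
    and ord0: "\<forall>U\<in>(overgroups G H). \<forall>V\<in>(overgroups G H). U \<subseteq> V \<longleftrightarrow> f U \<subseteq> f V"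
    using assms(4) unfolding boolean_interval_def by (elim exE conjE) (rule that; assumption)
  interpret group G by fact
  have ord: "U \<subseteq> V \<longleftrightarrow> f U \<subseteq> f V" if "U \<in> (overgroups G H)" "V \<in> (overgroups G H)" for U V
    using ord0 that by blast
  have img: "f U \<subseteq> {..<n}" if "U \<in> (overgroups G H)" for U
    using bij_betwE[OF bij] that by blast
  have im: "f ` (overgroups G H) = Pow {..<n}" using bij by (simp add: bij_betw_def)
  have pre: "\<exists>U\<in>(overgroups G H). f U = S" if "S \<subseteq> {..<n}" for S
  proof -
    have "S \<in> f ` (overgroups G H)" using im that by simp
    thus ?thesis by (elim imageE) auto
  qed
  have eqI: "U = V" if "U \<in> (overgroups G H)" "V \<in> (overgroups G H)" "f U = f V" for U V
    using ord[OF that(1,2)] ord[OF that(2,1)] that(3) by auto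
  have Oi: "U \<in> (overgroups G H) \<longleftrightarrow> subgroup U G \<and> H \<subseteq> U" for U unfolding overgroups_def by simp
  have HO: "H \<in> (overgroups G H)" using assms(3) Oi by blast
  have GO: "carrier G \<in> (overgroups G H)" using Oi[of "carrier G"] subgroup_self subgroup.subset[OF assms(3)] by blast
  have OI: "U \<inter> V \<in> (overgroups G H)" if "U \<in> (overgroups G H)" "V \<in> (overgroups G H)" for U V
    using Oi[of U] Oi[of V] Oi[of "U \<inter> V"] subgroups_Inter_pair that by auto
  have Oc: "U \<subseteq> carrier G" if "U \<in> (overgroups G H)" for U
    using that Oi[of U] subgroup.subset[of U G] by blast
  have OJ: "sg_join G U V \<in> (overgroups G H) \<and> U \<subseteq> sg_join G U V \<and> V \<subseteq> sg_join G U V"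
    if XY: "U \<in> (overgroups G H)" "V \<in> (overgroups G H)" for U V
  proof -
    have sub: "U \<union> V \<subseteq> carrier G" using Oc[OF XY(1)] Oc[OF XY(2)] by auto
    have "U \<union> V \<subseteq> generate G (U \<union> V)" by (auto intro: generate.incl)
    moreover have "subgroup (generate G (U \<union> V)) G" by (rule generate_is_subgroup[OF sub])
    moreover have "H \<subseteq> U" using XY(1) Oi by auto
    ultimately show ?thesis unfolding sg_join_def using Oi by blast
  qed
  have OJmin: "sg_join G U V \<subseteq> Z" if "Z \<in> (overgroups G H)" "U \<subseteq> Z" "V \<subseteq> Z" for U V Z
  proof -
    have "U \<union> V \<subseteq> Z" "subgroup Z G" using that Oi by auto
    thus "sg_join G U V \<subseteq> Z" unfolding sg_join_def by (rule generate_subgroup_incl)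
  qed
  have fH: "f H = {}"
  proof -
    obtain U where U: "U \<in> (overgroups G H)" "f U = {}" using pre by blast
    have "H \<subseteq> U" using U(1) Oi by auto
    thus ?thesis using ord[OF HO U(1)] U(2) by auto
  qed
  have fG: "f (carrier G) = {..<n}"
  proof -
    obtain U where U: "U \<in> (overgroups G H)" "f U = {..<n}" using pre by blast
    have "U \<subseteq> carrier G" using Oc[OF U(1)] .
    thus ?thesis using ord[OF U(1) GO] U(2) img[OF GO] by auto
  qed
  have KO: "K \<in> (overgroups G H)" and LO: "L \<in> (overgroups G H)" using assms by auto
  have KL: "K \<subseteq> L" "K \<noteq> L" using assms(7) by auto
  have sK: "subgroup K G" and sL: "subgroup L G" using KO LO Oi by auto
  have fKL: "f K \<subseteq> f L" using ord[OF KO LO] KL by blast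
  have "f K \<noteq> f L" using eqI[OF KO LO] KL by blast
  then obtain i where i: "i \<in> f L" "i \<notin> f K" using fKL by blast
  have iN: "i < n" using i img[OF LO] by blast
  have between: "M = K \<or> M = L" if "M \<in> (overgroups G H)" "K \<subseteq> M" "M \<subseteq> L" for M
  proof -
    have "subgroup M G" using that(1) Oi by auto
    thus ?thesis using idx2_between[OF assms(1,2) sK sL KL(1) assms(8) _ that(2,3)] by blast
  qed
  obtain A where AO: "A \<in> (overgroups G H)" and fA: "f A = {i}" using pre[of "{i}"] iN by auto
  obtain B where BO: "B \<in> (overgroups G H)" and fB: "f B = {..<n} - {i}" using pre[of "{..<n} - {i}"] by auto
  obtain M where MO: "M \<in> (overgroups G H)" and fM: "f M = insert i (f K)" using pre[of "insert i (f K)"] iN img[OF KO] by auto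
  have "M = K \<or> M = L" using between[OF MO] ord[OF KO MO] ord[OF MO LO] fM i fKL by auto
  hence fL: "f L = insert i (f K)" using fM i by auto
  have atom: "is_atom G H A"
    unfolding is_atom_def
  proof (intro conjI ballI impI)
    show "A \<in> (overgroups G H)" by fact
    show "A \<noteq> H" using fA fH by auto
    fix U assume U: "U \<in> (overgroups G H)" "U \<noteq> H \<and> U \<subseteq> A"
    have "f U \<subseteq> {i}" using U ord[OF U(1) AO] fA by blast
    moreover have "f U \<noteq> {}" using U eqI[OF U(1) HO] fH by auto
    ultimately have "f U = {i}" by (simp add: subset_singleton_iff)
    hence "f U = f A" using fA by simp
    thus "U = A" using eqI[OF U(1) AO] by blast
  qed
  have AL: "A \<subseteq> L" using ord[OF AO LO] fA i by auto
  have AK: "\<not> A \<subseteq> K" using ord[OF AO KO] fA i by auto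
  have join: "L = sg_join G K A"
  proof -
    have J: "sg_join G K A \<in> (overgroups G H)" "K \<subseteq> sg_join G K A" "A \<subseteq> sg_join G K A" using OJ[OF KO AO] by auto
    have "sg_join G K A \<subseteq> L" using OJmin[OF LO KL(1) AL] .
    thus ?thesis using between[OF J(1,2)] J(3) AK by auto
  qed
  have compl: "is_complement G H A B"
    unfolding is_complement_def
  proof (intro conjI)
    show "B \<in> (overgroups G H)" by fact
    have ABO: "A \<inter> B \<in> (overgroups G H)" using OI[OF AO BO] .
    have "f (A \<inter> B) \<subseteq> f A" "f (A \<inter> B) \<subseteq> f B" using ord[OF ABO AO] ord[OF ABO BO] by auto
    hence "f (A \<inter> B) = f H" using fA fB fH by auto
    thus "A \<inter> B = H" using eqI[OF ABO HO] by blast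
    have J: "sg_join G A B \<in> (overgroups G H)" "A \<subseteq> sg_join G A B" "B \<subseteq> sg_join G A B" using OJ[OF AO BO] by auto
    have "f A \<subseteq> f (sg_join G A B)" "f B \<subseteq> f (sg_join G A B)" using ord[OF AO J(1)] ord[OF BO J(1)] J(2,3) by auto
    hence "f (sg_join G A B) = f (carrier G)" using fA fB fG img[OF J(1)] iN by auto
    thus "sg_join G A B = carrier G" using eqI[OF J(1) GO] by blast
  qed
  have KB: "K \<subseteq> B" using ord[OF KO BO] fB i img[OF KO] by auto
  have LB: "L \<inter> B = K"
  proof -
    have LBO: "L \<inter> B \<in> (overgroups G H)" using OI[OF LO BO] .
    have "f (L \<inter> B) \<subseteq> f L" "f (L \<inter> B) \<subseteq> f B" using ord[OF LBO LO] ord[OF LBO BO] by auto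
    hence "f (L \<inter> B) \<subseteq> f K" using fL fB by auto
    hence "L \<inter> B \<subseteq> K" using ord[OF LBO KO] by blast
    thus ?thesis using KL KB by blast
  qed
  have coatomB: "U = B \<or> U = carrier G" if U: "U \<in> (overgroups G H)" "B \<subseteq> U" for U
  proof -
    have "f B \<subseteq> f U" using U(2) ord[OF BO U(1)] by blast
    hence "f U = f B \<or> f U = f (carrier G)" using fB fG img[OF U(1)] by auto
    thus "U = B \<or> U = carrier G" using eqI[OF U(1) BO] eqI[OF U(1) GO] by blast
  qed
  have BG: "B \<noteq> carrier G" using fB fG iN by auto
  obtain x where x: "x \<in> L" "x \<notin> K" using KL by blast
  have Kc: "K \<subseteq> carrier G" and Lc: "L \<subseteq> carrier G" and Bc: "B \<subseteq> carrier G"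
    using Oc[OF KO] Oc[OF LO] Oc[OF BO] by auto
  have xc: "x \<in> carrier G" using x(1) Lc by blast
  have key: "y \<otimes>\<^bsub>G\<^esub> z \<in> K" if "y \<in> L - K" "z \<in> L - K" for y z
    by (rule idx2_mult[OF assms(1,2) sK sL KL(1) assms(8) that])
  have invLK: "inv\<^bsub>G\<^esub> c \<in> L - K" if "c \<in> L - K" for c
  proof -
    have cc: "c \<in> carrier G" using that Lc by blast
    have "inv\<^bsub>G\<^esub> c \<in> L" using subgroup.m_inv_closed[OF sL] that by blast
    moreover have "inv\<^bsub>G\<^esub> c \<notin> K"
    proof
      assume "inv\<^bsub>G\<^esub> c \<in> K" hence "inv\<^bsub>G\<^esub> (inv\<^bsub>G\<^esub> c) \<in> K" using subgroup.m_inv_closed[OF sK] by blast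
      thus False using cc that by simp
    qed
    ultimately show ?thesis by blast
  qed
  have xLK: "x \<in> L - K" using x by blast
  have ixLK: "inv\<^bsub>G\<^esub> x \<in> L - K" using invLK[OF xLK] .
  have conjK: "cj G c K \<subseteq> K" if c: "c \<in> L - K" for c
  proof
    fix w assume "w \<in> cj G c K"
    then obtain k where k: "k \<in> K" "w = c \<otimes>\<^bsub>G\<^esub> k \<otimes>\<^bsub>G\<^esub> inv\<^bsub>G\<^esub> c" unfolding cj_def by blast
    have cc: "c \<in> carrier G" using c Lc by blast
    have kc: "k \<in> carrier G" using k(1) Kc by blast
    have "c \<otimes>\<^bsub>G\<^esub> k \<in> L" using subgroup.m_closed[OF sL] c k(1) KL(1) by blast
    moreover have "c \<otimes>\<^bsub>G\<^esub> k \<notin> K"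
    proof
      assume "c \<otimes>\<^bsub>G\<^esub> k \<in> K"
      hence "c \<otimes>\<^bsub>G\<^esub> k \<otimes>\<^bsub>G\<^esub> inv\<^bsub>G\<^esub> k \<in> K" using subgroup.m_closed[OF sK _ subgroup.m_inv_closed[OF sK k(1)]] by blast
      thus False using cc kc c by (simp add: m_assoc)
    qed
    ultimately have "c \<otimes>\<^bsub>G\<^esub> k \<in> L - K" by blast
    thus "w \<in> K" using key[OF _ invLK[OF c]] k(2) by simp
  qed
  have conjL: "cj G c L \<subseteq> L" if c: "c \<in> L" for c
  proof
    fix w assume "w \<in> cj G c L"
    then obtain k where k: "k \<in> L" "w = c \<otimes>\<^bsub>G\<^esub> k \<otimes>\<^bsub>G\<^esub> inv\<^bsub>G\<^esub> c" unfolding cj_def by blast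
    have "c \<otimes>\<^bsub>G\<^esub> k \<in> L" using subgroup.m_closed[OF sL c k(1)] .
    moreover have "inv\<^bsub>G\<^esub> c \<in> L" using subgroup.m_inv_closed[OF sL c] .
    ultimately show "w \<in> L" using subgroup.m_closed[OF sL] k(2) by blast
  qed
  have cxK: "cj G x K = K"
  proof
    show "cj G x K \<subseteq> K" using conjK[OF xLK] .
    have "cj G x (cj G (inv\<^bsub>G\<^esub> x) K) \<subseteq> cj G x K" using cj_mono[OF conjK[OF ixLK]] .
    thus "K \<subseteq> cj G x K" using cj_inv2[OF xc Kc] by simp
  qed
  have cixK: "cj G (inv\<^bsub>G\<^esub> x) K = K" using cj_inv[OF xc Kc] cxK by simp
  have cxL: "cj G x L = L"
  proof
    show "cj G x L \<subseteq> L" using conjL[OF x(1)] .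
    have "inv\<^bsub>G\<^esub> x \<in> L" using ixLK by blast
    hence "cj G x (cj G (inv\<^bsub>G\<^esub> x) L) \<subseteq> cj G x L" using cj_mono[OF conjL] by blast
    thus "L \<subseteq> cj G x L" using cj_inv2[OF xc Lc] by simp
  qed
  define B' where "B' = cj G x B"
  have sB: "subgroup B G" using BO Oi by auto
  have sB': "subgroup B' G" unfolding B'_def using cj_subgroup[OF xc sB] .
  have KB': "K \<subseteq> B'" unfolding B'_def using cj_mono[OF KB, of x] cxK by simp
  have HK: "H \<subseteq> K" using KO Oi by auto
  have B'O: "B' \<in> (overgroups G H)" using Oi sB' KB' HK by blast
  have B'c: "B' \<subseteq> carrier G" using Oc[OF B'O] .
  have ciB': "cj G (inv\<^bsub>G\<^esub> x) B' = B" unfolding B'_def using cj_inv[OF xc Bc] .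
  have coatomB': "U = B' \<or> U = carrier G" if U: "U \<in> (overgroups G H)" "B' \<subseteq> U" for U
  proof -
    have Uc: "U \<subseteq> carrier G" using Oc[OF U(1)] .
    have sU: "subgroup U G" using U(1) Oi by auto
    have sU': "subgroup (cj G (inv\<^bsub>G\<^esub> x) U) G" using cj_subgroup[OF inv_closed[OF xc] sU] .
    have BU': "B \<subseteq> cj G (inv\<^bsub>G\<^esub> x) U" using cj_mono[OF U(2), of "inv\<^bsub>G\<^esub> x"] ciB' by simp
    have "H \<subseteq> cj G (inv\<^bsub>G\<^esub> x) U" using HK KB BU' by blast
    hence U'O: "cj G (inv\<^bsub>G\<^esub> x) U \<in> (overgroups G H)" using Oi sU' by blast
    have eqU: "cj G x (cj G (inv\<^bsub>G\<^esub> x) U) = U" using cj_inv2[OF xc Uc] .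
    from coatomB[OF U'O BU'] show ?thesis
    proof
      assume "cj G (inv\<^bsub>G\<^esub> x) U = B" thus ?thesis using eqU B'_def by simp
    next
      assume "cj G (inv\<^bsub>G\<^esub> x) U = carrier G" thus ?thesis using eqU cj_carrier[OF xc] by simp
    qed
  qed
  have B'G: "B' \<noteq> carrier G"
  proof
    assume "B' = carrier G"
    hence "B = cj G (inv\<^bsub>G\<^esub> x) (carrier G)" using ciB' by simp
    thus False using cj_carrier[OF inv_closed[OF xc]] BG by simp
  qed
  have LB': "L \<inter> B' = K"
    unfolding B'_def using cj_Int[OF xc Lc Bc] cxL cxK LB by simp
  have "f B' \<noteq> {..<n}" using eqI[OF B'O GO] fG B'G by auto
  then obtain j where j: "j < n" "j \<notin> f B'" using img[OF B'O] by blast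
  obtain Mj where MjO: "Mj \<in> (overgroups G H)" and fMj: "f Mj = {..<n} - {j}" using pre[of "{..<n} - {j}"] by auto
  have "B' \<subseteq> Mj" using ord[OF B'O MjO] fMj j img[OF B'O] by auto
  moreover have "Mj \<noteq> carrier G" using fMj fG j by auto
  ultimately have MjB': "Mj = B'" using coatomB'[OF MjO] by blast
  have ji: "j = i"
  proof (rule ccontr)
    assume "j \<noteq> i"
    hence "i \<in> f B'" using MjB' fMj iN by auto
    hence "A \<subseteq> B'" using ord[OF AO B'O] fA by auto
    hence "A \<subseteq> K" using AL LB' by blast
    thus False using AK by blast
  qed
  have BB': "B' = B" using eqI[OF B'O BO] MjB' fMj fB ji by simp
  have conjB: "x \<otimes>\<^bsub>G\<^esub> b \<otimes>\<^bsub>G\<^esub> inv\<^bsub>G\<^esub> x \<in> B" if "b \<in> B" for b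
    using BB' that unfolding B'_def cj_def by blast
  have xx: "x \<otimes>\<^bsub>G\<^esub> x \<in> B" using key[OF xLK xLK] KB by blast
  have ixix: "inv\<^bsub>G\<^esub> x \<otimes>\<^bsub>G\<^esub> inv\<^bsub>G\<^esub> x \<in> B" using key[OF ixLK ixLK] KB by blast
  define S where "S = B \<union> (B #>\<^bsub>G\<^esub> x)"
  have memS: "y \<in> S \<longleftrightarrow> y \<in> B \<or> (\<exists>b\<in>B. y = b \<otimes>\<^bsub>G\<^esub> x)" for y
    unfolding S_def r_coset_def by blast
  have sS: "subgroup S G"
  proof (rule subgroupI)
    show "S \<subseteq> carrier G" using Bc xc memS by auto
    show "S \<noteq> {}" using subgroup.one_closed[OF sB] memS by blast
  next
    fix a assume "a \<in> S"
    hence "a \<in> B \<or> (\<exists>b\<in>B. a = b \<otimes>\<^bsub>G\<^esub> x)" using memS by blast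
    thus "inv\<^bsub>G\<^esub> a \<in> S"
    proof
      assume "a \<in> B" thus ?thesis using subgroup.m_inv_closed[OF sB] memS by blast
    next
      assume "\<exists>b\<in>B. a = b \<otimes>\<^bsub>G\<^esub> x"
      then obtain b where b: "b \<in> B" "a = b \<otimes>\<^bsub>G\<^esub> x" by blast
      have bc: "b \<in> carrier G" using b(1) Bc by blast
      have ib: "inv\<^bsub>G\<^esub> b \<in> B" using subgroup.m_inv_closed[OF sB b(1)] .
      have ibc: "inv\<^bsub>G\<^esub> b \<in> carrier G" using bc by simp
      have "inv\<^bsub>G\<^esub> x \<otimes>\<^bsub>G\<^esub> inv\<^bsub>G\<^esub> b \<otimes>\<^bsub>G\<^esub> x \<in> B"
      proof -
        have "cj G (inv\<^bsub>G\<^esub> x) B = B" using ciB' BB' by simp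
        thus ?thesis using ib unfolding cj_def using xc by auto
      qed
      hence "inv\<^bsub>G\<^esub> x \<otimes>\<^bsub>G\<^esub> inv\<^bsub>G\<^esub> b \<otimes>\<^bsub>G\<^esub> x \<otimes>\<^bsub>G\<^esub> (inv\<^bsub>G\<^esub> x \<otimes>\<^bsub>G\<^esub> inv\<^bsub>G\<^esub> x) \<in> B"
        using subgroup.m_closed[OF sB _ ixix] by blast
      moreover have "inv\<^bsub>G\<^esub> x \<otimes>\<^bsub>G\<^esub> inv\<^bsub>G\<^esub> b \<otimes>\<^bsub>G\<^esub> x \<otimes>\<^bsub>G\<^esub> (inv\<^bsub>G\<^esub> x \<otimes>\<^bsub>G\<^esub> inv\<^bsub>G\<^esub> x) = inv\<^bsub>G\<^esub> a \<otimes>\<^bsub>G\<^esub> inv\<^bsub>G\<^esub> x"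
        using b(2) bc xc by (simp add: m_assoc inv_mult_group)
      ultimately have "inv\<^bsub>G\<^esub> a \<otimes>\<^bsub>G\<^esub> inv\<^bsub>G\<^esub> x \<in> B" by simp
      moreover have "inv\<^bsub>G\<^esub> a = (inv\<^bsub>G\<^esub> a \<otimes>\<^bsub>G\<^esub> inv\<^bsub>G\<^esub> x) \<otimes>\<^bsub>G\<^esub> x" using b(2) bc xc by (simp add: m_assoc)
      ultimately show ?thesis using memS by blast
    qed
  next
    fix a c assume "a \<in> S" "c \<in> S"
    hence a: "a \<in> B \<or> (\<exists>b\<in>B. a = b \<otimes>\<^bsub>G\<^esub> x)" and c: "c \<in> B \<or> (\<exists>b\<in>B. c = b \<otimes>\<^bsub>G\<^esub> x)" using memS by blast+
    show "a \<otimes>\<^bsub>G\<^esub> c \<in> S"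
    proof (cases "a \<in> B")
      case aB: True
      have ac: "a \<in> carrier G" using aB Bc by blast
      show ?thesis
      proof (cases "c \<in> B")
        case True thus ?thesis using subgroup.m_closed[OF sB aB] memS by blast
      next
        case False
        then obtain b where b: "b \<in> B" "c = b \<otimes>\<^bsub>G\<^esub> x" using c by blast
        have bc: "b \<in> carrier G" using b(1) Bc by blast
        have "a \<otimes>\<^bsub>G\<^esub> c = (a \<otimes>\<^bsub>G\<^esub> b) \<otimes>\<^bsub>G\<^esub> x" using b(2) ac bc xc by (simp add: m_assoc)
        moreover have "a \<otimes>\<^bsub>G\<^esub> b \<in> B" using subgroup.m_closed[OF sB aB b(1)] .
        ultimately show ?thesis using memS by blast
      qed
    next
      case False
      then obtain b1 where b1: "b1 \<in> B" "a = b1 \<otimes>\<^bsub>G\<^esub> x" using a by blast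
      have b1c: "b1 \<in> carrier G" using b1(1) Bc by blast
      show ?thesis
      proof (cases "c \<in> B")
        case True
        have cc: "c \<in> carrier G" using True Bc by blast
        have "a \<otimes>\<^bsub>G\<^esub> c = (b1 \<otimes>\<^bsub>G\<^esub> (x \<otimes>\<^bsub>G\<^esub> c \<otimes>\<^bsub>G\<^esub> inv\<^bsub>G\<^esub> x)) \<otimes>\<^bsub>G\<^esub> x" using b1(2) cc b1c xc by (simp add: m_assoc)
        moreover have "b1 \<otimes>\<^bsub>G\<^esub> (x \<otimes>\<^bsub>G\<^esub> c \<otimes>\<^bsub>G\<^esub> inv\<^bsub>G\<^esub> x) \<in> B" using subgroup.m_closed[OF sB b1(1) conjB[OF True]] .
        ultimately show ?thesis using memS by blast
      next
        case False
        then obtain b2 where b2: "b2 \<in> B" "c = b2 \<otimes>\<^bsub>G\<^esub> x" using c by blast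
        have b2c: "b2 \<in> carrier G" using b2(1) Bc by blast
        have "a \<otimes>\<^bsub>G\<^esub> c = b1 \<otimes>\<^bsub>G\<^esub> (x \<otimes>\<^bsub>G\<^esub> b2 \<otimes>\<^bsub>G\<^esub> inv\<^bsub>G\<^esub> x) \<otimes>\<^bsub>G\<^esub> (x \<otimes>\<^bsub>G\<^esub> x)" using b1(2) b2(2) b1c b2c xc by (simp add: m_assoc)
        moreover have "b1 \<otimes>\<^bsub>G\<^esub> (x \<otimes>\<^bsub>G\<^esub> b2 \<otimes>\<^bsub>G\<^esub> inv\<^bsub>G\<^esub> x) \<otimes>\<^bsub>G\<^esub> (x \<otimes>\<^bsub>G\<^esub> x) \<in> B"
          using subgroup.m_closed[OF sB subgroup.m_closed[OF sB b1(1) conjB[OF b2(1)]] xx] .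
        ultimately show ?thesis using memS by simp
      qed
    qed
  qed
  have LS: "L \<subseteq> S"
  proof
    fix y assume y: "y \<in> L"
    show "y \<in> S"
    proof (cases "y \<in> K")
      case True thus ?thesis using KB memS by blast
    next
      case False
      have yc: "y \<in> carrier G" using y Lc by blast
      have "y \<otimes>\<^bsub>G\<^esub> inv\<^bsub>G\<^esub> x \<in> K" using key[OF _ ixLK] y False by blast
      moreover have "y = (y \<otimes>\<^bsub>G\<^esub> inv\<^bsub>G\<^esub> x) \<otimes>\<^bsub>G\<^esub> x" using yc xc by (simp add: m_assoc)
      ultimately show ?thesis using KB memS by blast
    qed
  qed
  have "A \<union> B \<subseteq> S" using AL LS memS by blast
  hence "sg_join G A B \<subseteq> S" unfolding sg_join_def by (rule generate_subgroup_incl[OF _ sS])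
  hence GS: "carrier G \<subseteq> S" using compl unfolding is_complement_def by simp
  have rc: "rcosets\<^bsub>G\<^esub> B = {B, B #>\<^bsub>G\<^esub> x}"
  proof
    show "rcosets\<^bsub>G\<^esub> B \<subseteq> {B, B #>\<^bsub>G\<^esub> x}"
    proof
      fix R assume "R \<in> rcosets\<^bsub>G\<^esub> B"
      then obtain g where g: "g \<in> carrier G" "R = B #>\<^bsub>G\<^esub> g" unfolding RCOSETS_def by blast
      have "g \<in> B \<or> (\<exists>b\<in>B. g = b \<otimes>\<^bsub>G\<^esub> x)" using GS g(1) memS by blast
      thus "R \<in> {B, B #>\<^bsub>G\<^esub> x}"
      proof
        assume "g \<in> B" thus ?thesis using subgroup.rcos_const[OF sB is_group] g(2) by simp
      next
        assume "\<exists>b\<in>B. g = b \<otimes>\<^bsub>G\<^esub> x"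
        then obtain b where b: "b \<in> B" "g = b \<otimes>\<^bsub>G\<^esub> x" by blast
        have "B #>\<^bsub>G\<^esub> g = (B #>\<^bsub>G\<^esub> b) #>\<^bsub>G\<^esub> x" using coset_mult_assoc[OF Bc _ xc] b Bc by auto
        also have "\<dots> = B #>\<^bsub>G\<^esub> x" using subgroup.rcos_const[OF sB is_group b(1)] by simp
        finally show ?thesis using g(2) by simp
      qed
    qed
    have "B = B #>\<^bsub>G\<^esub> \<one>\<^bsub>G\<^esub>" using Bc by simp
    hence "B \<in> rcosets\<^bsub>G\<^esub> B" using rcosetsI[OF Bc one_closed] by simp
    moreover have "B #>\<^bsub>G\<^esub> x \<in> rcosets\<^bsub>G\<^esub> B" using rcosetsI[OF Bc xc] .
    ultimately show "{B, B #>\<^bsub>G\<^esub> x} \<subseteq> rcosets\<^bsub>G\<^esub> B" by blast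
  qed
  have "x \<in> B #>\<^bsub>G\<^esub> x" using rcos_self[OF xc sB] .
  moreover have "x \<notin> B" using x LB by blast
  ultimately have "B \<noteq> B #>\<^bsub>G\<^esub> x" by blast
  hence "card (rcosets\<^bsub>G\<^esub> B) = 2" using rc by simp
  moreover have "G\<lparr>carrier := carrier G\<rparr> = G" by simp
  ultimately have idx: "sg_index G (carrier G) B = 2" unfolding sg_index_def by simp
  show ?thesis using atom join compl idx by blast
qed

end
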